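(* Let $k$ be admissible. Let $R=\mathrm{ad}(U(\mathfrak g))Q$ and $R^T=\mathrm{ad}(U(\mathfrak g))Q^T$. Let $u_1\ne0$ be an element of the zero-weight subspace $R_0$ of $R$, and $u_2\ne0$ an element of the zero-weight subspace $R^T_0$ of $R^T$. Let $p_1,p_2\in\mathbb C[h]$ be the unique polynomials with $$u_1\equiv p_1(h)\mod U(\mathfrak g)\mathfrak n_+,\qquad u_2\equiv p_2(h)\mod U(\mathfrak g)\mathfrak n_-.$$ Then for $\mu\in\mathfrak h^*$ the following are equivalent: (1) the irreducible highest weight $\mathfrak g$-module $V(\mu)$ is an $A(L(k,0))$-module; (2) $p_1(\mu)=0$; (3) $p_2(-\mu)=0$. Here $p(\mu)$ denotes $p$ evaluated at $h=\mu(h)$.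
   Context: $\mathfrak g=sl(2,\mathbb C)$ has basis $e,f,h$ with the usual relations, $\mathfrak h=\mathbb Ch$, $\mathfrak n_+=\mathbb Ce$, $\mathfrak n_-=\mathbb Cf$. The adjoint action is $\mathrm{ad}(x)u=xu-ux$. $x\mapsto x^T$ is the anti-automorphism of $U(\mathfrak g)$ with $x^T=-x$ for $x\in\mathfrak g$. $k=p/q$ is admissible: $q\in\mathbb N$, $p\in\mathbb Z$, $\gcd(p,q)=1$, $2q+p-2\ge0$. $L(k,0)$ is the simple quotient VOA of the level-$k$ vacuum $\hat{\mathfrak g}$-module $M(k,0)$, by the ideal generated by its singular vector $v_{sing}$. $Q=F([v_{sing}])\in U(\mathfrak g)$, where $F:A(M(k,0))\to U(\mathfrak g)$ is the isomorphism of Zhu's algebra given by $F[a_1(-i_1-1)\cdots a_n(-i_n-1)\mathbf 1]=(-1)^{i_1+\cdots+i_n}a_n\cdots a_1$. Then $A(L(k,0))\cong U(\mathfrak g)/\langle Q\rangle$, and a $\mathfrak g$-module is an $A(L(k,0))$-module iff it is annihilated by $Q$. $R$ and $R^T$ are irreducible $\mathfrak g$-modules isomorphic to $V(2N\omega)$, where $N=2q+p-1$ and $\omega$ is the fundamental weight ($\omega(h)=1$). Hence $R_0$ and $R^T_0$ are one-dimensional. *)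

theory Defs
  imports Complex_Main "HOL-Computational_Algebra.Polynomial"
begin

text \<open>A ring 'a together with a central embedding sc of the complex numbers
 (so 'a is a complex algebra) and elements e, f, h satisfying the sl2 relations
 such that the PBW monomials f^a h^b e^c form a basis over C.  Such an algebra
 is (canonically isomorphic to) U(sl(2,C)).\<close>

definition pbw_mono :: "'a::ring_1 \<Rightarrow> 'a \<Rightarrow> 'a \<Rightarrow> nat \<times> nat \<times> nat \<Rightarrow> 'a" where
  "pbw_mono e f h m = (case m of (a, b, c) \<Rightarrow> f ^ a * h ^ b * e ^ c)"

definition is_Usl2 :: "(complex \<Rightarrow> 'a::ring_1) \<Rightarrow> 'a \<Rightarrow> 'a \<Rightarrow> 'a \<Rightarrow> bool" where
  "is_Usl2 sc e f h \<longleftrightarrow>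
     (\<forall>a b. sc (a + b) = sc a + sc b) \<and> (\<forall>a b. sc (a * b) = sc a * sc b) \<and> sc 1 = 1 \<and>
     (\<forall>a x. sc a * x = x * sc a) \<and>
     e * f - f * e = h \<and> h * e - e * h = 2 * e \<and> h * f - f * h = - (2 * f) \<and>
     (\<forall>x. \<exists>c :: nat \<times> nat \<times> nat \<Rightarrow> complex. finite {m. c m \<noteq> 0} \<and>
            x = (\<Sum>m | c m \<noteq> 0. sc (c m) * pbw_mono e f h m)) \<and>
     (\<forall>c :: nat \<times> nat \<times> nat \<Rightarrow> complex. finite {m. c m \<noteq> 0} \<and>
            (\<Sum>m | c m \<noteq> 0. sc (c m) * pbw_mono e f h m) = 0 \<longrightarrow> (\<forall>m. c m = 0))"

definition is_transpose :: "(complex \<Rightarrow> 'a::ring_1) \<Rightarrow> 'a \<Rightarrow> 'a \<Rightarrow> 'a \<Rightarrow> ('a \<Rightarrow> 'a) \<Rightarrow> bool" where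
  "is_transpose sc e f h T \<longleftrightarrow>
     (\<forall>x y. T (x * y) = T y * T x) \<and> (\<forall>x y. T (x + y) = T x + T y) \<and>
     (\<forall>c. T (sc c) = sc c) \<and> T e = - e \<and> T f = - f \<and> T h = - h"

definition adj :: "'a::ring_1 \<Rightarrow> 'a \<Rightarrow> 'a" where
  "adj x u = x * u - u * x"

text \<open>ad(U(g))Q: the smallest C-subspace containing Q stable under ad e, ad f, ad h.\<close>
inductive_set ad_span :: "(complex \<Rightarrow> 'a::ring_1) \<Rightarrow> 'a \<Rightarrow> 'a \<Rightarrow> 'a \<Rightarrow> 'a \<Rightarrow> 'a set"
  for sc e f h Q where
  gen: "Q \<in> ad_span sc e f h Q"
| zero: "0 \<in> ad_span sc e f h Q"
| add: "u \<in> ad_span sc e f h Q \<Longrightarrow> v \<in> ad_span sc e f h Q \<Longrightarrow> u + v \<in> ad_span sc e f h Q"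
| smult: "u \<in> ad_span sc e f h Q \<Longrightarrow> sc c * u \<in> ad_span sc e f h Q"
| ad_e: "u \<in> ad_span sc e f h Q \<Longrightarrow> adj e u \<in> ad_span sc e f h Q"
| ad_f: "u \<in> ad_span sc e f h Q \<Longrightarrow> adj f u \<in> ad_span sc e f h Q"
| ad_h: "u \<in> ad_span sc e f h Q \<Longrightarrow> adj h u \<in> ad_span sc e f h Q"

definition ad_submodule :: "(complex \<Rightarrow> 'a::ring_1) \<Rightarrow> 'a \<Rightarrow> 'a \<Rightarrow> 'a \<Rightarrow> 'a set \<Rightarrow> bool" where
  "ad_submodule sc e f h W \<longleftrightarrow> 0 \<in> W \<and> (\<forall>u\<in>W. \<forall>v\<in>W. u + v \<in> W) \<and>
     (\<forall>c. \<forall>u\<in>W. sc c * u \<in> W) \<and> (\<forall>u\<in>W. adj e u \<in> W \<and> adj f u \<in> W \<and> adj h u \<in> W)"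

definition fin_dim :: "(complex \<Rightarrow> 'a::ring_1) \<Rightarrow> 'a set \<Rightarrow> bool" where
  "fin_dim sc W \<longleftrightarrow> (\<exists>S. finite S \<and> S \<subseteq> W \<and>
      W \<subseteq> {\<Sum>s\<in>S. sc (c s) * s | c. True})"

text \<open>W (an ad-submodule) is irreducible and isomorphic to V(n \<omega>), i.e. finite dimensional,
  irreducible, with a highest weight vector of h-weight n.\<close>
definition iso_V :: "(complex \<Rightarrow> 'a::ring_1) \<Rightarrow> 'a \<Rightarrow> 'a \<Rightarrow> 'a \<Rightarrow> 'a set \<Rightarrow> int \<Rightarrow> bool" where
  "iso_V sc e f h W n \<longleftrightarrow> ad_submodule sc e f h W \<and> fin_dim sc W \<and> W \<noteq> {0} \<and>
     (\<forall>W'. W' \<subseteq> W \<and> ad_submodule sc e f h W' \<longrightarrow> W' = {0} \<or> W' = W) \<and>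
     (\<exists>u\<in>W. u \<noteq> 0 \<and> adj e u = 0 \<and> adj h u = sc (of_int n) * u)"

definition zero_wt :: "'a::ring_1 \<Rightarrow> 'a set \<Rightarrow> 'a set" where
  "zero_wt h W = {u \<in> W. adj h u = 0}"

definition evalh :: "(complex \<Rightarrow> 'a::ring_1) \<Rightarrow> 'a \<Rightarrow> complex poly \<Rightarrow> 'a" where
  "evalh sc h p = (\<Sum>i\<le>degree p. sc (coeff p i) * h ^ i)"

text \<open>V(\<mu>) has basis v_i (i \<ge> 0, and i \<le> n if \<mu> = n \<in> N), with
  h v_i = (\<mu>-2i) v_i, f v_i = v_{i+1} (0 past the top), e v_{i+1} = (i+1)(\<mu>-i) v_i.
  Vectors are coefficient sequences; operators are defined on all sequences and vanish
  on the coordinates outside the allowed range.\<close>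

definition in_range :: "complex \<Rightarrow> nat \<Rightarrow> bool" where
  "in_range \<mu> i \<longleftrightarrow> (\<forall>n::nat. \<mu> = of_nat n \<longrightarrow> i \<le> n)"

definition Vcarrier :: "complex \<Rightarrow> (nat \<Rightarrow> complex) set" where
  "Vcarrier \<mu> = {v. finite {i. v i \<noteq> 0} \<and> (\<forall>i. \<not> in_range \<mu> i \<longrightarrow> v i = 0)}"

definition Hop :: "complex \<Rightarrow> (nat \<Rightarrow> complex) \<Rightarrow> (nat \<Rightarrow> complex)" where
  "Hop \<mu> v = (\<lambda>i. if in_range \<mu> i then (\<mu> - 2 * of_nat i) * v i else 0)"

definition Fop :: "complex \<Rightarrow> (nat \<Rightarrow> complex) \<Rightarrow> (nat \<Rightarrow> complex)" where
  "Fop \<mu> v = (\<lambda>i. if i = 0 \<or> \<not> in_range \<mu> i then 0 else v (i - 1))"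

definition Eop :: "complex \<Rightarrow> (nat \<Rightarrow> complex) \<Rightarrow> (nat \<Rightarrow> complex)" where
  "Eop \<mu> v = (\<lambda>i. if in_range \<mu> i then of_nat (i + 1) * (\<mu> - of_nat i) * v (Suc i) else 0)"

definition is_Vrep :: "(complex \<Rightarrow> 'a::ring_1) \<Rightarrow> 'a \<Rightarrow> 'a \<Rightarrow> 'a \<Rightarrow> complex
     \<Rightarrow> ('a \<Rightarrow> (nat \<Rightarrow> complex) \<Rightarrow> (nat \<Rightarrow> complex)) \<Rightarrow> bool" where
  "is_Vrep sc e f h \<mu> \<rho> \<longleftrightarrow>
     (\<forall>x y. \<rho> (x * y) = (\<lambda>v. \<rho> x (\<rho> y v))) \<and>
     (\<forall>x y. \<rho> (x + y) = (\<lambda>v i. \<rho> x v i + \<rho> y v i)) \<and>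
     (\<forall>c. \<rho> (sc c) = (\<lambda>v i. c * v i)) \<and>
     \<rho> e = Eop \<mu> \<and> \<rho> f = Fop \<mu> \<and> \<rho> h = Hop \<mu>"

text \<open>V(\<mu>) is annihilated by Q (equivalently, an A(L(k,0))-module when Q = F([v_sing])).\<close>
definition annihilates_V :: "(complex \<Rightarrow> 'a::ring_1) \<Rightarrow> 'a \<Rightarrow> 'a \<Rightarrow> 'a \<Rightarrow> 'a \<Rightarrow> complex \<Rightarrow> bool" where
  "annihilates_V sc e f h Q \<mu> \<longleftrightarrow>
     (\<forall>\<rho>. is_Vrep sc e f h \<mu> \<rho> \<longrightarrow> (\<forall>v\<in>Vcarrier \<mu>. \<rho> Q v = (\<lambda>_. 0)))"

definition admissible :: "int \<Rightarrow> int \<Rightarrow> bool" where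
  "admissible p q \<longleftrightarrow> q > 0 \<and> coprime p q \<and> 2 * q + p - 2 \<ge> 0"

end

theory Submission
  imports Defs
begin


definition lin :: "((nat \<Rightarrow> complex) \<Rightarrow> (nat \<Rightarrow> complex)) \<Rightarrow> bool" where
  "lin G \<longleftrightarrow> (\<forall>v w. G (\<lambda>i. v i + w i) = (\<lambda>i. G v i + G w i)) \<and>
              (\<forall>c v. G (\<lambda>i. c * v i) = (\<lambda>i. c * G v i))"

lemma lin_zero: "lin G \<Longrightarrow> G (\<lambda>i. 0) = (\<lambda>i. 0)"
proof -
  assume "lin G"
  then have "\<forall>c v. G (\<lambda>i. c * v i) = (\<lambda>i. c * G v i)" unfolding lin_def by blast
  from spec[OF spec[OF this, of 0], of "\<lambda>_. 0"] show ?thesis by simp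
qed

lemma lin_sum: assumes "lin G" "finite S"
  shows "G (\<lambda>i. \<Sum>m\<in>S. d m * w m i) = (\<lambda>i. \<Sum>m\<in>S. d m * G (w m) i)"
  using assms(2)
proof (induction S rule: finite_induct)
  case empty then show ?case using lin_zero[OF assms(1)] by simp
next
  case (insert x F)
  have "G (\<lambda>i. \<Sum>m\<in>insert x F. d m * w m i) = G (\<lambda>i. d x * w x i + (\<Sum>m\<in>F. d m * w m i))"
    using insert by simp
  also have "\<dots> = (\<lambda>i. G (\<lambda>i. d x * w x i) i + G (\<lambda>i. \<Sum>m\<in>F. d m * w m i) i)"
    using assms(1) unfolding lin_def by metis
  also have "\<dots> = (\<lambda>i. d x * G (w x) i + (\<Sum>m\<in>F. d m * G (w m) i))"
    using assms(1) insert unfolding lin_def by simp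
  finally show ?case using insert by simp
qed

lemma lin_comp: "lin G \<Longrightarrow> lin K \<Longrightarrow> lin (\<lambda>v. G (K v))"
  unfolding lin_def by simp

lemma lin_id: "lin (\<lambda>v. v)" unfolding lin_def by simp

lemma lin_pow: "lin G \<Longrightarrow> lin (G ^^ n)"
proof (induction n)
  case 0 then show ?case by (simp add: lin_id)
next
  case (Suc n) then show ?case using lin_comp[of G "G^^n"] by (simp add: comp_def)
qed

lemma lin_E: "lin (Eop \<mu>)" unfolding lin_def Eop_def by (auto simp: algebra_simps)
lemma lin_F: "lin (Fop \<mu>)" unfolding lin_def Fop_def by (auto simp: algebra_simps)
lemma lin_H: "lin (Hop \<mu>)" unfolding lin_def Hop_def by (auto simp: algebra_simps)

lemma in_range_down: "in_range \<mu> i \<Longrightarrow> j \<le> i \<Longrightarrow> in_range \<mu> j"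
  unfolding in_range_def by auto

lemma in_range_0: "in_range \<mu> 0" unfolding in_range_def by auto

lemma HF: "Hop \<mu> (Fop \<mu> w) = (\<lambda>i. Fop \<mu> (Hop \<mu> w) i - 2 * Fop \<mu> w i)"
proof
  fix i
  show "Hop \<mu> (Fop \<mu> w) i = Fop \<mu> (Hop \<mu> w) i - 2 * Fop \<mu> w i"
  proof (cases "i = 0 \<or> \<not> in_range \<mu> i")
    case True then show ?thesis unfolding Hop_def Fop_def by auto
  next
    case False
    then have "in_range \<mu> (i - 1)" using in_range_down by auto
    with False show ?thesis unfolding Hop_def Fop_def by (auto simp: algebra_simps of_nat_diff)
  qed
qed

lemma EF: "Eop \<mu> (Fop \<mu> w) = (\<lambda>i. Fop \<mu> (Eop \<mu> w) i + Hop \<mu> w i)"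
proof
  fix i
  show "Eop \<mu> (Fop \<mu> w) i = Fop \<mu> (Eop \<mu> w) i + Hop \<mu> w i"
  proof (cases "in_range \<mu> i")
    case False then show ?thesis unfolding Hop_def Fop_def Eop_def by auto
  next
    case True
    have A: "Fop \<mu> (Eop \<mu> w) i = of_nat i * (\<mu> - of_nat i + 1) * w i"
    proof (cases i)
      case 0 then show ?thesis unfolding Fop_def by simp
    next
      case (Suc j)
      then have "in_range \<mu> j" using True in_range_down by auto
      with True Suc show ?thesis unfolding Fop_def Eop_def by (simp add: algebra_simps)
    qed
    have B: "Eop \<mu> (Fop \<mu> w) i = of_nat (i+1) * (\<mu> - of_nat i) * w i"
    proof (cases "in_range \<mu> (Suc i)")
      case True2: True
      with True show ?thesis unfolding Fop_def Eop_def by simp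
    next
      case False
      then obtain n where "\<mu> = of_nat n" "\<not> Suc i \<le> n" unfolding in_range_def by blast
      moreover have "i \<le> n" using True calculation(1) unfolding in_range_def by blast
      ultimately have "\<mu> = of_nat i" by (simp add: not_less_eq_eq antisym)
      with True show ?thesis unfolding Fop_def Eop_def by simp
    qed
    show ?thesis unfolding A B using True unfolding Hop_def by (simp add: algebra_simps)
  qed
qed

lemma EH: "Eop \<mu> (Hop \<mu> w) = (\<lambda>i. Hop \<mu> (Eop \<mu> w) i - 2 * Eop \<mu> w i)"
proof
  fix i
  show "Eop \<mu> (Hop \<mu> w) i = Hop \<mu> (Eop \<mu> w) i - 2 * Eop \<mu> w i"
  proof (cases "in_range \<mu> i")
    case False then show ?thesis unfolding Hop_def Eop_def by auto
  next
    case True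
    show ?thesis
    proof (cases "in_range \<mu> (Suc i)")
      case True2: True
      with True show ?thesis unfolding Hop_def Eop_def by (simp add: algebra_simps)
    next
      case False
      then obtain n where "\<mu> = of_nat n" "\<not> Suc i \<le> n" unfolding in_range_def by blast
      moreover have "i \<le> n" using True calculation(1) unfolding in_range_def by blast
      ultimately have "\<mu> = of_nat i" by (simp add: not_less_eq_eq antisym)
      with True show ?thesis unfolding Hop_def Eop_def by simp
    qed
  qed
qed



locale U2 =
  fixes sc :: "complex \<Rightarrow> 'a::ring_1" and e f h :: 'a
  assumes U: "is_Usl2 sc e f h"
begin

abbreviation mono where "mono \<equiv> pbw_mono e f h"

lemma sc_add: "sc (a + b) = sc a + sc b" using U unfolding is_Usl2_def by blast
lemma sc_mult: "sc (a * b) = sc a * sc b" using U unfolding is_Usl2_def by blast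
lemma sc_one: "sc 1 = 1" using U unfolding is_Usl2_def by blast
lemma sc_comm: "sc a * x = x * sc a" using U unfolding is_Usl2_def by blast
lemma rel_ef: "e * f - f * e = h" using U unfolding is_Usl2_def by blast
lemma rel_he: "h * e - e * h = 2 * e" using U unfolding is_Usl2_def by blast
lemma rel_hf: "h * f - f * h = - (2 * f)" using U unfolding is_Usl2_def by blast
lemma span: "\<exists>c. finite {m. c m \<noteq> 0} \<and> x = (\<Sum>m | c m \<noteq> 0. sc (c m) * mono m)"
  using U unfolding is_Usl2_def by blast
lemma uniq: "finite {m. c m \<noteq> 0} \<Longrightarrow> (\<Sum>m | c m \<noteq> 0. sc (c m) * mono m) = 0 \<Longrightarrow> c m = 0"
  using U unfolding is_Usl2_def by blast

lemma sc_zero[simp]: "sc 0 = 0"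
  using sc_add[of 0 0] by simp
lemma sc_neg: "sc (- a) = - sc a"
  using sc_add[of a "-a"] by (simp add: eq_neg_iff_add_eq_0 add.commute)
lemma sc_diff: "sc (a - b) = sc a - sc b"
  using sc_add[of a "-b"] sc_neg[of b] by simp
lemma sc_of_nat: "sc (of_nat n) = of_nat n"
  by (induction n) (simp_all add: sc_add sc_one)
lemma sc_two: "sc 2 = 2"
  using sc_of_nat[of 2] by simp
lemma sc_sum: "sc (\<Sum>i\<in>S. g i) = (\<Sum>i\<in>S. sc (g i))"
  by (induction S rule: infinite_finite_induct) (simp_all add: sc_add)

lemma rel_ef': "e * f = f * e + h" using rel_ef by (simp add: algebra_simps)
lemma rel_he': "h * e = e * h + 2 * e" using rel_he by (simp add: algebra_simps)
lemma rel_hf': "h * f = f * h - 2 * f" using rel_hf by (simp add: algebra_simps)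

lemma sum_sc_mult: "(\<Sum>m\<in>S. sc (d m) * z m) * y = (\<Sum>m\<in>S. sc (d m) * (z m * y))"
  by (simp add: sum_distrib_right mult.assoc)
lemma sc_left: "x * (sc a * y) = sc a * (x * y)"
  by (metis mult.assoc sc_comm)
lemma mult_sum_sc: "x * (\<Sum>m\<in>S. sc (d m) * z m) = (\<Sum>m\<in>S. sc (d m) * (x * z m))"
  by (simp add: sum_distrib_left sc_left)

definition lmap :: "('a \<Rightarrow> (nat \<Rightarrow> complex) \<Rightarrow> (nat \<Rightarrow> complex)) \<Rightarrow> bool" where
  "lmap \<phi> \<longleftrightarrow> (\<forall>x y v i. \<phi> (x + y) v i = \<phi> x v i + \<phi> y v i) \<and>
               (\<forall>c x v i. \<phi> (sc c * x) v i = c * \<phi> x v i)"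

lemma lmap_add: "lmap \<phi> \<Longrightarrow> \<phi> (x + y) v i = \<phi> x v i + \<phi> y v i"
  unfolding lmap_def by blast
lemma lmap_scal: "lmap \<phi> \<Longrightarrow> \<phi> (sc c * x) v i = c * \<phi> x v i"
  unfolding lmap_def by blast
lemma lmap_zero: "lmap \<phi> \<Longrightarrow> \<phi> 0 v i = 0"
  using lmap_scal[of \<phi> 0 0] by simp
lemma lmap_neg: "lmap \<phi> \<Longrightarrow> \<phi> (- x) v i = - \<phi> x v i"
  using lmap_add[of \<phi> x "-x" v i] lmap_zero[of \<phi> v i] by (simp add: eq_neg_iff_add_eq_0 add.commute)
lemma lmap_diff: "lmap \<phi> \<Longrightarrow> \<phi> (x - y) v i = \<phi> x v i - \<phi> y v i"
  using lmap_add[of \<phi> x "-y" v i] lmap_neg[of \<phi> y v i] by simp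
lemma lmap_two: "lmap \<phi> \<Longrightarrow> \<phi> (2 * x) v i = 2 * \<phi> x v i"
  using lmap_scal[of \<phi> 2 x v i] by (simp add: sc_two)
lemma lmap_sum: "lmap \<phi> \<Longrightarrow> \<phi> (\<Sum>m\<in>S. sc (d m) * z m) v i = (\<Sum>m\<in>S. d m * \<phi> (z m) v i)"
proof (induction S rule: infinite_finite_induct)
  case (infinite A) then show ?case by (simp add: lmap_zero)
next
  case empty then show ?case by (simp add: lmap_zero)
next
  case (insert x F) then show ?case by (simp add: lmap_add lmap_scal)
qed

definition OP :: "complex \<Rightarrow> nat \<times> nat \<times> nat \<Rightarrow> (nat \<Rightarrow> complex) \<Rightarrow> (nat \<Rightarrow> complex)" where
  "OP \<mu> m = (case m of (a, b, c) \<Rightarrow> (\<lambda>v. (Fop \<mu> ^^ a) ((Hop \<mu> ^^ b) ((Eop \<mu> ^^ c) v))))"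

lemma lin_OP: "lin (OP \<mu> m)"
proof -
  obtain a b c where m: "m = (a, b, c)" by (cases m)
  have "lin (\<lambda>v. (Fop \<mu> ^^ a) ((\<lambda>v. (Hop \<mu> ^^ b) ((Eop \<mu> ^^ c) v)) v))"
    by (rule lin_comp[OF lin_pow[OF lin_F] lin_comp[OF lin_pow[OF lin_H] lin_pow[OF lin_E]]])
  then show ?thesis unfolding OP_def m by simp
qed

definition coord :: "'a \<Rightarrow> nat \<times> nat \<times> nat \<Rightarrow> complex" where
  "coord x = (SOME c. finite {m. c m \<noteq> 0} \<and> x = (\<Sum>m | c m \<noteq> 0. sc (c m) * mono m))"

definition rho0 :: "complex \<Rightarrow> 'a \<Rightarrow> (nat \<Rightarrow> complex) \<Rightarrow> (nat \<Rightarrow> complex)" where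
  "rho0 \<mu> x = (\<lambda>v i. \<Sum>m | coord x m \<noteq> 0. coord x m * OP \<mu> m v i)"

lemma coord: "finite {m. coord x m \<noteq> 0}" "x = (\<Sum>m | coord x m \<noteq> 0. sc (coord x m) * mono m)"
  using someI_ex[OF span[of x]] unfolding coord_def by blast+

lemma span_S: "\<exists>S c. finite S \<and> x = (\<Sum>m\<in>S. sc (c m) * mono m)"
  using coord by blast

lemma rep_unique:
  assumes S: "finite S" and x: "x = (\<Sum>m\<in>S. sc (d m) * mono m)"
  shows "rho0 \<mu> x v i = (\<Sum>m\<in>S. d m * OP \<mu> m v i)"
proof -
  define c where "c = coord x"
  define C where "C = {m. c m \<noteq> 0}"
  have C: "finite C" unfolding C_def c_def using coord by blast
  have xc: "x = (\<Sum>m\<in>C. sc (c m) * mono m)" unfolding C_def c_def using coord by blast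
  define A where "A = S \<union> C"
  have A: "finite A" unfolding A_def using S C by simp
  define d' where "d' m = (if m \<in> S then d m else 0)" for m
  have x1: "x = (\<Sum>m\<in>A. sc (c m) * mono m)"
    unfolding xc by (rule sum.mono_neutral_left) (use S C in \<open>auto simp: A_def C_def\<close>)
  have x2: "x = (\<Sum>m\<in>A. sc (d' m) * mono m)"
    unfolding x by (rule sum.mono_neutral_cong_left) (use S C in \<open>auto simp: A_def d'_def\<close>)
  define D where "D m = d' m - c m" for m
  have DA: "{m. D m \<noteq> 0} \<subseteq> A" unfolding D_def d'_def A_def C_def by auto
  have "(\<Sum>m\<in>A. sc (D m) * mono m) = 0"
    unfolding D_def sc_diff by (simp add: algebra_simps sum_subtractf x1[symmetric] x2[symmetric])
  moreover have "(\<Sum>m\<in>A. sc (D m) * mono m) = (\<Sum>m | D m \<noteq> 0. sc (D m) * mono m)"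
    by (rule sum.mono_neutral_right) (use A DA in auto)
  ultimately have D0: "D m = 0" for m using uniq[of D m] finite_subset[OF DA A] by simp
  have "rho0 \<mu> x v i = (\<Sum>m\<in>C. c m * OP \<mu> m v i)" unfolding rho0_def C_def c_def by simp
  also have "\<dots> = (\<Sum>m\<in>A. c m * OP \<mu> m v i)"
    by (rule sum.mono_neutral_left) (use S C in \<open>auto simp: A_def C_def\<close>)
  also have "\<dots> = (\<Sum>m\<in>A. d' m * OP \<mu> m v i)"
    using D0 unfolding D_def by simp
  also have "\<dots> = (\<Sum>m\<in>S. d m * OP \<mu> m v i)"
    by (rule sum.mono_neutral_cong_right) (use S C in \<open>auto simp: A_def d'_def\<close>)
  finally show ?thesis .
qed

lemma lmap_rho0: "lmap (rho0 \<mu>)"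
  unfolding lmap_def
proof (intro conjI allI)
  fix x y v i
  obtain S c where S: "finite S" "x = (\<Sum>m\<in>S. sc (c m) * mono m)" using span_S by blast
  obtain S' c' where S': "finite S'" "y = (\<Sum>m\<in>S'. sc (c' m) * mono m)" using span_S by blast
  define cx where "cx m = (if m \<in> S then c m else 0)" for m
  define cy where "cy m = (if m \<in> S' then c' m else 0)" for m
  have fin: "finite (S \<union> S')" using S S' by simp
  have x: "x = (\<Sum>m\<in>S \<union> S'. sc (cx m) * mono m)"
    unfolding S by (rule sum.mono_neutral_cong_left) (use S(1) S'(1) in \<open>auto simp: cx_def\<close>)
  have y: "y = (\<Sum>m\<in>S \<union> S'. sc (cy m) * mono m)"
    unfolding S' by (rule sum.mono_neutral_cong_left) (use S(1) S'(1) in \<open>auto simp: cy_def\<close>)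
  have xy: "x + y = (\<Sum>m\<in>S \<union> S'. sc (cx m + cy m) * mono m)"
    unfolding x y by (simp add: sc_add algebra_simps sum.distrib)
  show "rho0 \<mu> (x + y) v i = rho0 \<mu> x v i + rho0 \<mu> y v i"
    unfolding rep_unique[OF fin xy] rep_unique[OF fin x] rep_unique[OF fin y]
    by (simp add: algebra_simps sum.distrib)
next
  fix a x v i
  obtain S c where S: "finite S" "x = (\<Sum>m\<in>S. sc (c m) * mono m)" using span_S by blast
  have "sc a * x = (\<Sum>m\<in>S. sc (a * c m) * mono m)"
    unfolding S by (simp add: sum_distrib_left sc_mult mult.assoc)
  then have "rho0 \<mu> (sc a * x) v i = (\<Sum>m\<in>S. (a * c m) * OP \<mu> m v i)"
    by (rule rep_unique[OF S(1)])
  then show "rho0 \<mu> (sc a * x) v i = a * rho0 \<mu> x v i"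
    unfolding rep_unique[OF S(1) S(2)] by (simp add: sum_distrib_left mult.assoc)
qed

lemma rho0_mono: "rho0 \<mu> (mono m) = OP \<mu> m"
proof (intro ext)
  fix v i
  have "mono m = (\<Sum>m'\<in>{m}. sc 1 * mono m')" by (simp add: sc_one)
  from rep_unique[OF _ this] show "rho0 \<mu> (mono m) v i = OP \<mu> m v i" by simp
qed

lemma ext_left:
  assumes G: "lin G" and z: "\<And>c. z * sc c = sc c * z"
    and m: "\<And>m v. rho0 \<mu> (z * mono m) v = G (OP \<mu> m v)"
  shows "rho0 \<mu> (z * y) v = G (rho0 \<mu> y v)"
proof -
  obtain S c where S: "finite S" "y = (\<Sum>m\<in>S. sc (c m) * mono m)" using span_S by blast
  have zy: "z * y = (\<Sum>m\<in>S. sc (c m) * (z * mono m))"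
    unfolding S(2) by (simp add: mult_sum_sc)
  have "rho0 \<mu> (z * y) v = (\<lambda>i. \<Sum>m\<in>S. c m * rho0 \<mu> (z * mono m) v i)"
    unfolding zy by (rule ext, rule lmap_sum[OF lmap_rho0])
  also have "\<dots> = (\<lambda>i. \<Sum>m\<in>S. c m * G (OP \<mu> m v) i)" using m by simp
  also have "\<dots> = G (\<lambda>i. \<Sum>m\<in>S. c m * OP \<mu> m v i)" using lin_sum[OF G S(1)] by simp
  also have "(\<lambda>i. \<Sum>m\<in>S. c m * OP \<mu> m v i) = rho0 \<mu> y v"
    using rep_unique[OF S] by auto
  finally show ?thesis .
qed

lemma mono_f: "f * mono (a, b, c) = mono (Suc a, b, c)"
  unfolding pbw_mono_def by (simp add: mult.assoc)
lemma mono_h: "h * mono (0, b, c) = mono (0, Suc b, c)"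
  unfolding pbw_mono_def by (simp add: mult.assoc)
lemma mono_e: "e * mono (0, 0, c) = mono (0, 0, Suc c)"
  unfolding pbw_mono_def by (simp add: mult.assoc)

lemma OP_f: "OP \<mu> (Suc a, b, c) v = Fop \<mu> (OP \<mu> (a, b, c) v)"
  unfolding OP_def by simp
lemma OP_h: "OP \<mu> (0, Suc b, c) v = Hop \<mu> (OP \<mu> (0, b, c) v)"
  unfolding OP_def by simp
lemma OP_e: "OP \<mu> (0, 0, Suc c) v = Eop \<mu> (OP \<mu> (0, 0, c) v)"
  unfolding OP_def by simp

lemma rho0_f: "rho0 \<mu> (f * y) v = Fop \<mu> (rho0 \<mu> y v)"
  by (rule ext_left[OF lin_F sc_comm[symmetric]]) (auto simp: mono_f rho0_mono OP_f)

lemma rho0_h_mono: "rho0 \<mu> (h * mono (a, b, c)) v = Hop \<mu> (OP \<mu> (a, b, c) v)"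
proof (induction a arbitrary: v)
  case 0 then show ?case by (simp add: mono_h rho0_mono OP_h)
next
  case (Suc a)
  have "h * mono (Suc a, b, c) = f * (h * mono (a, b, c)) - 2 * (f * mono (a, b, c))"
    unfolding mono_f[symmetric] mult.assoc[symmetric] rel_hf' by (simp add: algebra_simps)
  then have "rho0 \<mu> (h * mono (Suc a, b, c)) v =
     (\<lambda>i. Fop \<mu> (Hop \<mu> (OP \<mu> (a, b, c) v)) i - 2 * Fop \<mu> (OP \<mu> (a, b, c) v) i)"
    by (auto simp: lmap_diff[OF lmap_rho0] lmap_two[OF lmap_rho0] rho0_f Suc rho0_mono)
  also have "\<dots> = Hop \<mu> (OP \<mu> (Suc a, b, c) v)" unfolding OP_f HF ..
  finally show ?case .
qed

lemma rho0_h: "rho0 \<mu> (h * y) v = Hop \<mu> (rho0 \<mu> y v)"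
  by (rule ext_left[OF lin_H sc_comm[symmetric]]) (auto simp: rho0_h_mono)

lemma rho0_e_mono0: "rho0 \<mu> (e * mono (0, b, c)) v = Eop \<mu> (OP \<mu> (0, b, c) v)"
proof (induction b arbitrary: v)
  case 0 then show ?case by (simp add: mono_e rho0_mono OP_e)
next
  case (Suc b)
  have "e * mono (0, Suc b, c) = h * (e * mono (0, b, c)) - 2 * (e * mono (0, b, c))"
    unfolding mono_h[symmetric] mult.assoc[symmetric] rel_he' by (simp add: algebra_simps)
  then have "rho0 \<mu> (e * mono (0, Suc b, c)) v =
     (\<lambda>i. Hop \<mu> (Eop \<mu> (OP \<mu> (0, b, c) v)) i - 2 * Eop \<mu> (OP \<mu> (0, b, c) v) i)"
    by (auto simp: lmap_diff[OF lmap_rho0] lmap_two[OF lmap_rho0] rho0_h Suc)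
  also have "\<dots> = Eop \<mu> (OP \<mu> (0, Suc b, c) v)" unfolding OP_h EH ..
  finally show ?case .
qed

lemma rho0_e_mono: "rho0 \<mu> (e * mono (a, b, c)) v = Eop \<mu> (OP \<mu> (a, b, c) v)"
proof (induction a arbitrary: v)
  case 0 then show ?case by (rule rho0_e_mono0)
next
  case (Suc a)
  have "e * mono (Suc a, b, c) = f * (e * mono (a, b, c)) + h * mono (a, b, c)"
    unfolding mono_f[symmetric] mult.assoc[symmetric] rel_ef' by (simp add: algebra_simps)
  then have "rho0 \<mu> (e * mono (Suc a, b, c)) v =
     (\<lambda>i. Fop \<mu> (Eop \<mu> (OP \<mu> (a, b, c) v)) i + Hop \<mu> (OP \<mu> (a, b, c) v) i)"
    by (auto simp: lmap_add[OF lmap_rho0] rho0_f rho0_h Suc rho0_mono)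
  also have "\<dots> = Eop \<mu> (OP \<mu> (Suc a, b, c) v)" unfolding OP_f EF ..
  finally show ?case .
qed

lemma rho0_e: "rho0 \<mu> (e * y) v = Eop \<mu> (rho0 \<mu> y v)"
  by (rule ext_left[OF lin_E sc_comm[symmetric]]) (auto simp: rho0_e_mono)

lemma rho0_one: "rho0 \<mu> 1 v = v"
proof -
  have "(1::'a) = mono (0, 0, 0)" unfolding pbw_mono_def by simp
  then have "rho0 \<mu> 1 v = OP \<mu> (0, 0, 0) v" using rho0_mono[of \<mu> "(0, 0, 0)"] by simp
  then show ?thesis by (simp add: OP_def)
qed

definition good where "good \<mu> x \<longleftrightarrow> (\<forall>y v. rho0 \<mu> (x * y) v = rho0 \<mu> x (rho0 \<mu> y v))"

lemma good_step:
  assumes z: "\<And>y v. rho0 \<mu> (z * y) v = G (rho0 \<mu> y v)" and g: "good \<mu> x"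
  shows "good \<mu> (z * x)"
  unfolding good_def
proof (intro allI)
  fix y v
  have "rho0 \<mu> (z * x * y) v = rho0 \<mu> (z * (x * y)) v" by (simp add: mult.assoc)
  also have "\<dots> = G (rho0 \<mu> x (rho0 \<mu> y v))" using z g unfolding good_def by simp
  also have "\<dots> = rho0 \<mu> (z * x) (rho0 \<mu> y v)" using z by simp
  finally show "rho0 \<mu> (z * x * y) v = rho0 \<mu> (z * x) (rho0 \<mu> y v)" .
qed

lemma good_one: "good \<mu> 1"
  unfolding good_def by (simp add: rho0_one)

lemma good_mono: "good \<mu> (mono (a, b, c))"
proof (induction a)
  case 0
  show ?case
  proof (induction b)
    case 0
    show ?case
    proof (induction c)
      case 0
      have "mono (0, 0, 0) = 1" unfolding pbw_mono_def by simp
      then show ?case using good_one by simp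
    next
      case (Suc c) then show ?case
        using good_step[OF rho0_e Suc] mono_e by simp
    qed
  next
    case (Suc b) then show ?case
      using good_step[OF rho0_h Suc] mono_h by simp
  qed
next
  case (Suc a) then show ?case
    using good_step[OF rho0_f Suc] mono_f by simp
qed

lemma rho0_mult: "rho0 \<mu> (x * y) v = rho0 \<mu> x (rho0 \<mu> y v)"
proof -
  obtain S c where S: "finite S" "x = (\<Sum>m\<in>S. sc (c m) * mono m)" using span_S by blast
  have xy: "x * y = (\<Sum>m\<in>S. sc (c m) * (mono m * y))" unfolding S(2) by (rule sum_sc_mult)
  show ?thesis
  proof
    fix i
    have "rho0 \<mu> (x * y) v i = (\<Sum>m\<in>S. c m * rho0 \<mu> (mono m * y) v i)"
      unfolding xy by (rule lmap_sum[OF lmap_rho0])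
    also have "\<dots> = (\<Sum>m\<in>S. c m * rho0 \<mu> (mono m) (rho0 \<mu> y v) i)"
      using good_mono unfolding good_def by (simp add: prod_cases3 split_paired_all)
    also have "\<dots> = rho0 \<mu> x (rho0 \<mu> y v) i"
      unfolding S(2) by (rule lmap_sum[OF lmap_rho0, symmetric])
    finally show "rho0 \<mu> (x * y) v i = rho0 \<mu> x (rho0 \<mu> y v) i" .
  qed
qed

lemma rho0_sc: "rho0 \<mu> (sc c) v i = c * v i"
  using lmap_scal[OF lmap_rho0, of \<mu> c 1] by (simp add: rho0_one)

lemma rho0_gen: "rho0 \<mu> e = Eop \<mu>" "rho0 \<mu> f = Fop \<mu>" "rho0 \<mu> h = Hop \<mu>"
  using rho0_e[of \<mu> 1] rho0_f[of \<mu> 1] rho0_h[of \<mu> 1] by (auto simp: rho0_one)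

lemma Vrep_exists: "is_Vrep sc e f h \<mu> (rho0 \<mu>)"
  unfolding is_Vrep_def
  by (auto simp: rho0_mult lmap_add[OF lmap_rho0] rho0_sc rho0_gen intro!: ext)

end



definition delta0 :: "nat \<Rightarrow> complex" where "delta0 = (\<lambda>i. if i = 0 then 1 else 0)"

lemma carrier_E: "v \<in> Vcarrier \<mu> \<Longrightarrow> Eop \<mu> v \<in> Vcarrier \<mu>"
proof -
  assume v: "v \<in> Vcarrier \<mu>"
  have "{i. Eop \<mu> v i \<noteq> 0} \<subseteq> Suc -` {i. v i \<noteq> 0}" unfolding Eop_def by auto
  moreover have "finite (Suc -` {i. v i \<noteq> 0})" using v unfolding Vcarrier_def
    by (intro finite_vimageI) auto
  ultimately have "finite {i. Eop \<mu> v i \<noteq> 0}" by (rule finite_subset)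
  then show ?thesis unfolding Vcarrier_def mem_Collect_eq by (simp add: Eop_def)
qed

lemma carrier_F: "v \<in> Vcarrier \<mu> \<Longrightarrow> Fop \<mu> v \<in> Vcarrier \<mu>"
proof -
  assume v: "v \<in> Vcarrier \<mu>"
  have "{i. Fop \<mu> v i \<noteq> 0} \<subseteq> Suc ` {i. v i \<noteq> 0}"
  proof
    fix i assume "i \<in> {i. Fop \<mu> v i \<noteq> 0}"
    then have "i \<noteq> 0" "v (i - 1) \<noteq> 0" unfolding Fop_def by (auto split: if_splits)
    then show "i \<in> Suc ` {i. v i \<noteq> 0}" by (intro image_eqI[of _ _ "i - 1"]) auto
  qed
  moreover have "finite (Suc ` {i. v i \<noteq> 0})" using v unfolding Vcarrier_def by auto
  ultimately have "finite {i. Fop \<mu> v i \<noteq> 0}" by (rule finite_subset)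
  then show ?thesis unfolding Vcarrier_def mem_Collect_eq by (simp add: Fop_def)
qed

lemma carrier_H: "v \<in> Vcarrier \<mu> \<Longrightarrow> Hop \<mu> v \<in> Vcarrier \<mu>"
proof -
  assume v: "v \<in> Vcarrier \<mu>"
  have "{i. Hop \<mu> v i \<noteq> 0} \<subseteq> {i. v i \<noteq> 0}" unfolding Hop_def by auto
  then have "finite {i. Hop \<mu> v i \<noteq> 0}" by (rule finite_subset) (use v in \<open>simp add: Vcarrier_def\<close>)
  then show ?thesis unfolding Vcarrier_def mem_Collect_eq by (simp add: Hop_def)
qed

lemma carrier_pow: "(\<And>v. v \<in> Vcarrier \<mu> \<Longrightarrow> G v \<in> Vcarrier \<mu>) \<Longrightarrow> v \<in> Vcarrier \<mu> \<Longrightarrow> (G ^^ n) v \<in> Vcarrier \<mu>"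
  by (induction n) auto

lemma carrier_sum:
  assumes "finite S" "\<And>m. m \<in> S \<Longrightarrow> w m \<in> Vcarrier \<mu>"
  shows "(\<lambda>i. \<Sum>m\<in>S. d m * w m i) \<in> Vcarrier \<mu>"
proof -
  have "{i. (\<Sum>m\<in>S. d m * w m i) \<noteq> 0} \<subseteq> (\<Union>m\<in>S. {i. w m i \<noteq> 0})"
  proof
    fix i assume "i \<in> {i. (\<Sum>m\<in>S. d m * w m i) \<noteq> 0}"
    then obtain m where "m \<in> S" "d m * w m i \<noteq> 0" using sum.neutral by (metis (mono_tags, lifting) mem_Collect_eq)
    then show "i \<in> (\<Union>m\<in>S. {i. w m i \<noteq> 0})" by auto
  qed
  moreover have "finite (\<Union>m\<in>S. {i. w m i \<noteq> 0})" using assms unfolding Vcarrier_def by auto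
  ultimately show ?thesis using assms unfolding Vcarrier_def by (auto intro: finite_subset)
qed

lemma delta0_carrier: "delta0 \<in> Vcarrier \<mu>"
  unfolding Vcarrier_def delta0_def using in_range_0 by auto

lemma Hop_delta0: "Hop \<mu> delta0 = (\<lambda>i. \<mu> * delta0 i)"
  unfolding Hop_def delta0_def using in_range_0 by auto
lemma Eop_delta0: "Eop \<mu> delta0 = (\<lambda>i. 0)"
  unfolding Eop_def delta0_def by auto

lemma Fpow_delta0: "(Fop \<mu> ^^ n) delta0 = (\<lambda>j. if j = n \<and> in_range \<mu> n then 1 else 0)"
proof (induction n)
  case 0 then show ?case unfolding delta0_def using in_range_0 by auto
next
  case (Suc n)
  show ?case
  proof
    fix j
    show "(Fop \<mu> ^^ Suc n) delta0 j = (if j = Suc n \<and> in_range \<mu> (Suc n) then 1 else 0)"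
      using Suc in_range_down[of \<mu> "Suc n" n] unfolding Fop_def by auto
  qed
qed

lemma pos_wt:
  assumes v: "v \<in> Vcarrier \<mu>" and H: "Hop \<mu> v = (\<lambda>i. (\<mu> + of_nat k) * v i)" and k: "k > 0"
  shows "v = (\<lambda>i. 0)"
proof
  fix j
  show "v j = 0"
  proof (cases "in_range \<mu> j")
    case True
    then have "(\<mu> - 2 * of_nat j) * v j = (\<mu> + of_nat k) * v j" using fun_cong[OF H, of j]
      unfolding Hop_def by simp
    then have "(of_nat (2 * j + k) :: complex) * v j = 0" by (simp add: algebra_simps)
    then show ?thesis using k by (simp only: mult_eq_0_iff of_nat_eq_0_iff) simp
  next
    case False then show ?thesis using v unfolding Vcarrier_def by auto
  qed
qed

lemma sing_wt:
  assumes v: "v \<in> Vcarrier \<mu>" and E: "Eop \<mu> v = (\<lambda>i. 0)"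
    and H: "Hop \<mu> v = (\<lambda>i. (\<mu> - 2 * of_nat k) * v i)" and k: "k > 0"
  shows "v = (\<lambda>i. 0)"
proof
  fix j
  show "v j = 0"
  proof (cases "in_range \<mu> j")
    case True
    show ?thesis
    proof (cases "j = k")
      case False
      from True have "(\<mu> - 2 * of_nat j) * v j = (\<mu> - 2 * of_nat k) * v j" using fun_cong[OF H, of j]
        unfolding Hop_def by simp
      then have "(2 * of_nat k - 2 * of_nat j :: complex) * v j = 0" by (simp add: algebra_simps)
      moreover have "(2 * of_nat k - 2 * of_nat j :: complex) \<noteq> 0" using False by simp
      ultimately show ?thesis by simp
    next
      case jk: True
      obtain l where l: "k = Suc l" using k by (cases k) auto
      have rl: "in_range \<mu> l" using True jk l in_range_down by auto
      have "Eop \<mu> v l = 0" using E by simp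
      then have "of_nat (l + 1) * (\<mu> - of_nat l) * v (Suc l) = 0" using rl unfolding Eop_def by simp
      moreover have "\<mu> \<noteq> of_nat l"
        using True jk l unfolding in_range_def by auto
      moreover have "(of_nat (l + 1) :: complex) \<noteq> 0" by (simp only: of_nat_eq_0_iff)
      ultimately show ?thesis using jk l by (simp only: mult_eq_0_iff) simp
    qed
  next
    case False then show ?thesis using v unfolding Vcarrier_def by auto
  qed
qed

context U2
begin

context
  fixes \<mu> \<rho>
  assumes vr: "is_Vrep sc e f h \<mu> \<rho>"
begin

lemma vr_mult: "\<rho> (x * y) v = \<rho> x (\<rho> y v)"
  using vr unfolding is_Vrep_def by simp
lemma vr_add: "\<rho> (x + y) v i = \<rho> x v i + \<rho> y v i"
  using vr unfolding is_Vrep_def by simp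
lemma vr_sc: "\<rho> (sc c) v = (\<lambda>i. c * v i)"
  using vr unfolding is_Vrep_def by simp
lemma vr_gen: "\<rho> e = Eop \<mu>" "\<rho> f = Fop \<mu>" "\<rho> h = Hop \<mu>"
  using vr unfolding is_Vrep_def by simp_all
lemma vr_lmap: "lmap \<rho>"
  unfolding lmap_def by (simp add: vr_add vr_mult vr_sc)
lemma vr_one: "\<rho> 1 v = v"
  using vr_sc[of 1 v] by (simp add: sc_one)
lemma vr_pow: "\<rho> (x ^ n) v = (\<rho> x ^^ n) v"
  by (induction n arbitrary: v) (simp_all add: vr_one vr_mult)
lemma vr_mono: "\<rho> (mono m) v = OP \<mu> m v"
  unfolding pbw_mono_def OP_def by (cases m) (simp add: vr_mult vr_pow vr_gen)
lemma vr_scalvec: "\<rho> x (\<lambda>i. c * v i) = (\<lambda>i. c * \<rho> x v i)"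
proof -
  have "\<rho> x (\<rho> (sc c) v) = \<rho> (sc c) (\<rho> x v)"
    using vr_mult[of x "sc c" v] vr_mult[of "sc c" x v] sc_comm[of c x] by simp
  then show ?thesis by (simp add: vr_sc)
qed
lemma vr_zerovec: "\<rho> x (\<lambda>i. 0) = (\<lambda>i. 0)"
  using vr_scalvec[of x 0 "\<lambda>_. 0"] by simp
lemma vr_zero: "\<rho> 0 v = (\<lambda>i. 0)"
  using lmap_zero[OF vr_lmap] by auto

lemma vr_carrier: "v \<in> Vcarrier \<mu> \<Longrightarrow> \<rho> x v \<in> Vcarrier \<mu>"
proof -
  assume v: "v \<in> Vcarrier \<mu>"
  obtain S c where S: "finite S" "x = (\<Sum>m\<in>S. sc (c m) * mono m)" using span_S by blast
  have "\<rho> x v = (\<lambda>i. \<Sum>m\<in>S. c m * OP \<mu> m v i)"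
    unfolding S(2) by (rule ext) (simp add: lmap_sum[OF vr_lmap] vr_mono)
  moreover have "OP \<mu> m v \<in> Vcarrier \<mu>" for m
    unfolding OP_def using v
    by (cases m) (auto intro!: carrier_pow carrier_E carrier_F carrier_H)
  ultimately show ?thesis using carrier_sum[OF S(1)] by simp
qed

lemma vr_polyz:
  assumes z: "\<rho> z delta0 = (\<lambda>i. l * delta0 i)"
  shows "\<rho> (\<Sum>i\<le>d. sc (a i) * z ^ i) delta0 = (\<lambda>j. (\<Sum>i\<le>d. a i * l ^ i) * delta0 j)"
proof -
  have zp: "\<rho> (z ^ i) delta0 = (\<lambda>j. l ^ i * delta0 j)" for i
  proof (induction i)
    case 0 then show ?case by (simp add: vr_one)
  next
    case (Suc i)
    have "\<rho> (z ^ Suc i) delta0 = \<rho> z (\<rho> (z ^ i) delta0)" by (simp add: vr_mult)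
    also have "\<dots> = (\<lambda>j. l ^ i * (l * delta0 j))" unfolding Suc vr_scalvec z ..
    finally show ?case by (simp add: algebra_simps)
  qed
  show ?thesis
    by (rule ext) (simp add: lmap_sum[OF vr_lmap] zp sum_distrib_right mult.assoc)
qed

lemma vr_evalh: "\<rho> (evalh sc h p) delta0 = (\<lambda>j. poly p \<mu> * delta0 j)"
  unfolding evalh_def poly_altdef
  by (rule vr_polyz) (simp add: vr_gen Hop_delta0)

lemma vr_ye: "\<rho> (y * e) delta0 = (\<lambda>i. 0)"
  by (simp add: vr_mult vr_gen Eop_delta0 vr_zerovec)

lemma vr_fz0: "\<rho> (f * z) v 0 = 0"
  by (simp add: vr_mult vr_gen Fop_def)

lemma vr_decomp:
  assumes v: "v \<in> Vcarrier \<mu>"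
  shows "v = \<rho> (\<Sum>j | v j \<noteq> 0. sc (v j) * f ^ j) delta0"
proof
  fix i
  have fin: "finite {j. v j \<noteq> 0}" using v unfolding Vcarrier_def by auto
  have "\<rho> (\<Sum>j | v j \<noteq> 0. sc (v j) * f ^ j) delta0 i
     = (\<Sum>j | v j \<noteq> 0. v j * (if i = j \<and> in_range \<mu> j then 1 else 0))"
    by (simp add: lmap_sum[OF vr_lmap] vr_pow vr_gen Fpow_delta0)
  also have "\<dots> = (\<Sum>j\<in>{j. v j \<noteq> 0} \<inter> {i}. v j * (if in_range \<mu> j then 1 else 0))"
    using fin by (intro sum.mono_neutral_cong_right) auto
  also have "\<dots> = v i"
    using v unfolding Vcarrier_def by (cases "v i = 0") auto
  finally show "v i = \<rho> (\<Sum>j | v j \<noteq> 0. sc (v j) * f ^ j) delta0 i" by simp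
qed

end

end



lemma adj_add: "adj x (u + v) = adj x u + adj x v"
  unfolding adj_def by (simp add: algebra_simps)
lemma adj_zero: "adj x 0 = 0"
  unfolding adj_def by simp
lemma adj_neg: "adj x (- u) = - adj x u"
  unfolding adj_def by (simp add: algebra_simps)
lemma adj_diff: "adj x (u - v) = adj x u - adj x v"
  unfolding adj_def by (simp add: algebra_simps)
lemma adj_jacobi: "adj x (adj y w) = adj y (adj x w) + adj (x * y - y * x) w"
  unfolding adj_def by (simp add: algebra_simps mult.assoc)
lemma two_comm: "(2::'a::ring_1) * x = x * 2"
  by (metis mult_of_nat_commute of_nat_numeral)
lemma adj_two: "adj (2 * x) w = 2 * adj x w"
proof -
  have "w * (2 * x) = 2 * (w * x)" by (metis mult.assoc two_comm)
  then show ?thesis unfolding adj_def by (simp add: right_diff_distrib mult.assoc)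
qed
lemma adj_negx: "adj (- x) w = - adj x w"
  unfolding adj_def by (simp add: algebra_simps)
lemma adj_mult_left: "x * w = adj x w + w * x"
  unfolding adj_def by simp

context U2
begin

lemma adj_sc: "adj x (sc c * u) = sc c * adj x u"
  unfolding adj_def by (simp add: sc_left right_diff_distrib mult.assoc)

lemma adj_sum: "adj x (\<Sum>i\<in>S. sc (c i) * w i) = (\<Sum>i\<in>S. sc (c i) * adj x (w i))"
  by (induction S rule: infinite_finite_induct) (simp_all add: adj_zero adj_add adj_sc)

lemma adj_ef: "adj e (adj f w) = adj f (adj e w) + adj h w"
  using adj_jacobi[of e f w] rel_ef by simp
lemma adj_hf: "adj h (adj f w) = adj f (adj h w) - 2 * adj f w"
  using adj_jacobi[of h f w] rel_hf by (simp add: adj_negx adj_two)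

definition wv :: "'a \<Rightarrow> nat \<Rightarrow> 'a" where "wv u i = (adj f ^^ i) u"

definition Wsp :: "'a \<Rightarrow> 'a set" where
  "Wsp u = {\<Sum>i<n. sc (c i) * wv u i | c n. True}"

lemma Wsp_I: "r = (\<Sum>i<n. sc (c i) * wv u i) \<Longrightarrow> r \<in> Wsp u"
  unfolding Wsp_def by blast

lemma wv_Suc: "wv u (Suc i) = adj f (wv u i)" unfolding wv_def by simp
lemma wv_0: "wv u 0 = u" unfolding wv_def by simp

context
  fixes u :: 'a and N :: nat
  assumes ue: "adj e u = 0" and uh: "adj h u = sc (of_nat (2 * N)) * u"
begin

lemma W1: "adj h (wv u i) = sc (of_nat (2 * N) - 2 * of_nat i) * wv u i"
proof (induction i)
  case 0 then show ?case using uh by (simp add: wv_0)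
next
  case (Suc i)
  have "adj h (wv u (Suc i)) = sc (of_nat (2 * N) - 2 * of_nat i) * wv u (Suc i) - 2 * wv u (Suc i)"
    unfolding wv_Suc adj_hf Suc adj_sc ..
  also have "\<dots> = sc (of_nat (2 * N) - 2 * of_nat i) * wv u (Suc i) - sc 2 * wv u (Suc i)"
    by (simp add: sc_two)
  also have "\<dots> = sc (of_nat (2 * N) - 2 * of_nat (Suc i)) * wv u (Suc i)"
    by (simp only: left_diff_distrib[symmetric] sc_diff[symmetric]) (simp add: algebra_simps)
  finally show ?case .
qed

lemma W2: "adj e (wv u (Suc i)) = sc (of_nat (Suc i) * (of_nat (2 * N) - of_nat i)) * wv u i"
proof (induction i)
  case 0 then show ?case using uh ue by (simp add: wv_Suc wv_0 adj_ef adj_zero)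
next
  case (Suc i)
  have "adj e (wv u (Suc (Suc i))) = sc (of_nat (Suc i) * (of_nat (2 * N) - of_nat i)) * wv u (Suc i)
      + sc (of_nat (2 * N) - 2 * of_nat (Suc i)) * wv u (Suc i)"
  proof -
    have "adj e (wv u (Suc (Suc i))) = adj f (adj e (wv u (Suc i))) + adj h (wv u (Suc i))"
      by (simp only: wv_Suc[of u "Suc i"] adj_ef)
    also have "\<dots> = adj f (sc (of_nat (Suc i) * (of_nat (2 * N) - of_nat i)) * wv u i)
       + sc (of_nat (2 * N) - 2 * of_nat (Suc i)) * wv u (Suc i)"
      by (simp only: Suc W1)
    finally show ?thesis by (simp only: adj_sc wv_Suc[symmetric])
  qed
  also have "\<dots> = sc (of_nat (Suc i) * (of_nat (2 * N) - of_nat i) + (of_nat (2 * N) - 2 * of_nat (Suc i))) * wv u (Suc i)"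
    by (simp only: sc_add distrib_right)
  also have "of_nat (Suc i) * (of_nat (2 * N) - of_nat i) + (of_nat (2 * N) - 2 * of_nat (Suc i))
      = (of_nat (Suc (Suc i)) * (of_nat (2 * N) - of_nat (Suc i)) :: complex)"
    by (simp add: algebra_simps)
  finally show ?case .
qed

lemma Wsp_ext: "n \<le> n' \<Longrightarrow> (\<Sum>i<n. sc (c i) * wv u i) = (\<Sum>i<n'. sc (if i < n then c i else 0) * wv u i)"
  by (rule sum.mono_neutral_cong_left) auto

lemma Wsp_sub: "ad_submodule sc e f h (Wsp u)"
  unfolding ad_submodule_def
proof (intro conjI ballI allI)
  show "0 \<in> Wsp u" unfolding Wsp_def by (rule CollectI, rule exI[of _ "\<lambda>_. 0"], rule exI[of _ 0]) simp
next
  fix x y assume "x \<in> Wsp u" "y \<in> Wsp u"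
  then obtain c n c' n' where x: "x = (\<Sum>i<n. sc (c i) * wv u i)" and y: "y = (\<Sum>i<n'. sc (c' i) * wv u i)"
    unfolding Wsp_def by blast
  define m where "m = max n n'"
  have x': "x = (\<Sum>i<m. sc (if i < n then c i else 0) * wv u i)"
    unfolding x m_def by (rule Wsp_ext) simp
  have y': "y = (\<Sum>i<m. sc (if i < n' then c' i else 0) * wv u i)"
    unfolding y m_def by (rule Wsp_ext) simp
  have "x + y = (\<Sum>i<m. sc ((if i < n then c i else 0) + (if i < n' then c' i else 0)) * wv u i)"
    unfolding x' y' by (simp only: sc_add distrib_right sum.distrib)
  then show "x + y \<in> Wsp u" by (rule Wsp_I)
next
  fix a x assume "x \<in> Wsp u"
  then obtain c n where x: "x = (\<Sum>i<n. sc (c i) * wv u i)" unfolding Wsp_def by blast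
  have "sc a * x = (\<Sum>i<n. sc (a * c i) * wv u i)"
    unfolding x by (simp add: sum_distrib_left sc_mult mult.assoc)
  then show "sc a * x \<in> Wsp u" by (rule Wsp_I)
next
  fix x assume "x \<in> Wsp u"
  then obtain c n where x: "x = (\<Sum>i<n. sc (c i) * wv u i)" unfolding Wsp_def by blast
  have "adj h x = (\<Sum>i<n. sc (c i * (of_nat (2 * N) - 2 * of_nat i)) * wv u i)"
    unfolding x adj_sum W1 by (simp add: sc_mult mult.assoc)
  then show "adj h x \<in> Wsp u" by (rule Wsp_I)
  have "adj f x = (\<Sum>i<n. sc (c i) * wv u (Suc i))"
    unfolding x adj_sum wv_Suc ..
  also have "\<dots> = (\<Sum>i<Suc n. sc (if i = 0 then 0 else c (i - 1)) * wv u i)"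
    unfolding sum.lessThan_Suc_shift by simp
  finally show "adj f x \<in> Wsp u" by (rule Wsp_I)
  show "adj e x \<in> Wsp u"
  proof (cases n)
    case 0 then show ?thesis unfolding x Wsp_def adj_sum
      by (intro CollectI exI[of _ "\<lambda>_. 0"] exI[of _ 0]) simp
  next
    case (Suc n')
    have "adj e x = (\<Sum>i<n'. sc (c (Suc i)) * adj e (wv u (Suc i)))"
      unfolding x Suc sum.lessThan_Suc_shift by (simp add: wv_0 ue adj_add adj_sc adj_sum adj_zero)
    also have "\<dots> = (\<Sum>i<n'. sc (c (Suc i) * (of_nat (Suc i) * (of_nat (2 * N) - of_nat i))) * wv u i)"
      unfolding W2 by (simp add: sc_mult mult.assoc)
    finally show ?thesis by (rule Wsp_I)
  qed
qed

lemma u_Wsp: "u \<in> Wsp u"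
proof -
  have "u = (\<Sum>i<1. sc ((\<lambda>_. 1) i) * wv u i)" by (simp add: sc_one wv_0)
  then show ?thesis unfolding Wsp_def by (intro CollectI exI conjI) (assumption, rule TrueI)
qed

lemma proj0: "r = (\<Sum>i<n. sc (c i) * wv u i) \<Longrightarrow> adj h r = 0 \<Longrightarrow> \<exists>a. r = sc a * wv u N"
proof (induction n arbitrary: c r)
  case 0 then show ?case by (intro exI[of _ 0]) simp
next
  case (Suc n)
  define r' where "r' = (\<Sum>i<n. sc (c i) * wv u i)"
  have r: "r = r' + sc (c n) * wv u n" unfolding Suc.prems(1) r'_def by simp
  show ?case
  proof (cases "n = N")
    case True
    have "adj h (wv u n) = 0" using True W1[of n] by simp
    then have "adj h r' = 0" using Suc.prems(2) unfolding r adj_add adj_sc by simp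
    from Suc.IH[OF r'_def this] obtain a where "r' = sc a * wv u N" by blast
    then have "r = sc (a + c n) * wv u N" unfolding r using True by (simp add: sc_add distrib_right)
    then show ?thesis by blast
  next
    case False
    define l where "l i = (of_nat (2 * N) - 2 * of_nat i :: complex)" for i
    have ln: "l n \<noteq> 0" using False unfolding l_def by simp
    have "0 = adj h r" using Suc.prems(2) by simp
    also have "\<dots> = (\<Sum>i<n. sc (c i * l i) * wv u i) + sc (c n * l n) * wv u n"
      unfolding r r'_def adj_add adj_sum adj_sc W1 l_def by (simp add: sc_mult mult.assoc)
    finally have eq: "sc (c n * l n) * wv u n = - (\<Sum>i<n. sc (c i * l i) * wv u i)"
      by (simp add: eq_neg_iff_add_eq_0 add.commute)
    define K where "K = 1 / l n"
    have s1: "sc K * (\<Sum>i<n. sc (c i * l i) * wv u i) = (\<Sum>i<n. sc (K * (c i * l i)) * wv u i)"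
      by (simp only: sum_distrib_left sc_mult mult.assoc)
    have "sc (c n) * wv u n = sc (K * (c n * l n)) * wv u n"
      using ln unfolding K_def by simp
    also have "\<dots> = sc K * (sc (c n * l n) * wv u n)"
      by (simp only: sc_mult mult.assoc)
    also have "\<dots> = - (\<Sum>i<n. sc (K * (c i * l i)) * wv u i)"
      unfolding eq mult_minus_right s1 ..
    finally have s2: "sc (c n) * wv u n = - (\<Sum>i<n. sc (K * (c i * l i)) * wv u i)" .
    have "r = (\<Sum>i<n. sc (c i) * wv u i) - (\<Sum>i<n. sc (K * (c i * l i)) * wv u i)"
      unfolding r r'_def s2 by simp
    then have "r = (\<Sum>i<n. sc (c i - K * (c i * l i)) * wv u i)"
      by (simp only: sum_subtractf[symmetric] sc_diff left_diff_distrib)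
    from Suc.IH[OF this Suc.prems(2)] show ?thesis .
  qed
qed

end

end



context U2
begin

lemma span_sum: "(\<And>i. i < (n::nat) \<Longrightarrow> w i \<in> ad_span sc e f h Q) \<Longrightarrow> (\<Sum>i<n. sc (c i) * w i) \<in> ad_span sc e f h Q"
proof (induction n)
  case 0 then show ?case by (simp add: ad_span.zero)
next
  case (Suc n) then show ?case by (simp add: ad_span.add ad_span.smult)
qed

lemma wv_span: "u \<in> ad_span sc e f h Q \<Longrightarrow> wv u i \<in> ad_span sc e f h Q"
  by (induction i) (simp_all add: wv_0 wv_Suc ad_span.ad_f)

lemma Wsp_span: "u \<in> ad_span sc e f h Q \<Longrightarrow> Wsp u \<subseteq> ad_span sc e f h Q"
  unfolding Wsp_def using span_sum wv_span by blast

context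
  fixes T assumes T: "is_transpose sc e f h T"
begin

lemma T_mult: "T (x * y) = T y * T x" using T unfolding is_transpose_def by blast
lemma T_add: "T (x + y) = T x + T y" using T unfolding is_transpose_def by blast
lemma T_sc: "T (sc c) = sc c" using T unfolding is_transpose_def by blast
lemma T_gen: "T e = - e" "T f = - f" "T h = - h" using T unfolding is_transpose_def by blast+
lemma T_zero: "T 0 = 0" using T_add[of 0 0] by simp
lemma T_neg: "T (- x) = - T x"
  using T_add[of x "-x"] T_zero by (simp add: eq_neg_iff_add_eq_0 add.commute)
lemma T_diff: "T (x - y) = T x - T y"
  using T_add[of x "-y"] T_neg[of y] by simp
lemma T_scm: "T (sc c * x) = sc c * T x"
  using T_mult[of "sc c" x] T_sc[of c] sc_comm[of c "T x"] by simp
lemma T_one: "T 1 = 1" using T_sc[of 1] by (simp add: sc_one)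
lemma T_pow: "T (x ^ n) = (T x) ^ n"
  by (induction n) (simp_all add: T_one T_mult power_commutes)
lemma T_sum: "T (\<Sum>i\<in>S. g i) = (\<Sum>i\<in>S. T (g i))"
  by (induction S rule: infinite_finite_induct) (simp_all add: T_zero T_add)

lemma TT_mult: "T (T (x * y)) = T (T x) * T (T y)" by (simp add: T_mult)
lemma TT_pow: "T (T (x ^ n)) = (T (T x)) ^ n" by (simp add: T_pow)
lemma TT_gen: "T (T e) = e" "T (T f) = f" "T (T h) = h" by (simp_all add: T_gen T_neg)

lemma TT: "T (T x) = x"
proof -
  obtain S c where S: "finite S" "x = (\<Sum>m\<in>S. sc (c m) * mono m)" using span_S by blast
  have "T (T (mono m)) = mono m" for m
    unfolding pbw_mono_def by (cases m) (simp add: TT_mult TT_pow TT_gen del: T_mult)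
  then show ?thesis unfolding S(2) by (simp add: T_sum T_scm)
qed

lemma T_adj: "T (adj x u) = adj (- T x) (T u)"
  unfolding adj_def by (simp add: T_diff T_mult algebra_simps)

lemma T_adj_gen: "T (adj e u) = adj e (T u)" "T (adj f u) = adj f (T u)" "T (adj h u) = adj h (T u)"
  by (simp_all add: T_adj T_gen)

lemma T_span: "u \<in> ad_span sc e f h (T Q) \<Longrightarrow> T u \<in> ad_span sc e f h Q"
proof (induction rule: ad_span.induct)
  case gen then show ?case by (simp add: TT ad_span.gen)
next
  case zero then show ?case by (simp add: T_zero ad_span.zero)
next
  case (add u v) then show ?case by (simp add: T_add ad_span.add)
next
  case (smult u c) then show ?case by (simp add: T_scm ad_span.smult)
next
  case (ad_e u) then show ?case by (simp add: T_adj_gen ad_span.ad_e)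
next
  case (ad_f u) then show ?case by (simp add: T_adj_gen ad_span.ad_f)
next
  case (ad_h u) then show ?case by (simp add: T_adj_gen ad_span.ad_h)
qed

lemma T_evalh: "T (evalh sc h p) = (\<Sum>i\<le>degree p. sc (coeff p i) * (- h) ^ i)"
  unfolding evalh_def by (simp add: T_sum T_scm T_pow T_gen)

end

lemma vr_Hw:
  assumes vr: "is_Vrep sc e f h \<mu> \<rho>" and W: "adj h w = sc l * w"
  shows "Hop \<mu> (\<rho> w delta0) = (\<lambda>j. (\<mu> + l) * \<rho> w delta0 j)"
proof
  fix j
  have "Hop \<mu> (\<rho> w delta0) j = \<rho> (h * w) delta0 j" by (simp add: vr_mult[OF vr] vr_gen[OF vr])
  also have "\<dots> = \<rho> (adj h w) delta0 j + \<rho> w (\<rho> h delta0) j"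
    unfolding adj_mult_left[of h w] by (simp add: vr_add[OF vr] vr_mult[OF vr])
  also have "\<dots> = l * \<rho> w delta0 j + \<mu> * \<rho> w delta0 j"
    unfolding W by (simp add: lmap_scal[OF vr_lmap[OF vr]] vr_gen[OF vr] Hop_delta0 vr_scalvec[OF vr])
  finally show "Hop \<mu> (\<rho> w delta0) j = (\<mu> + l) * \<rho> w delta0 j" by (simp add: algebra_simps)
qed

lemma kill_all:
  assumes vr: "is_Vrep sc e f h \<mu> \<rho>"
    and ue: "adj e u = 0" and uh: "adj h u = sc (of_nat (2 * N)) * u"
    and wN: "\<rho> (wv u N) delta0 = (\<lambda>i. 0)"
  shows "\<rho> (wv u i) delta0 = (\<lambda>i. 0)"
proof (cases "i < N")
  case True
  have "Hop \<mu> (\<rho> (wv u i) delta0) = (\<lambda>j. (\<mu> + (of_nat (2 * N) - 2 * of_nat i)) * \<rho> (wv u i) delta0 j)"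
    by (rule vr_Hw[OF vr W1[OF ue uh]])
  also have "(of_nat (2 * N) - 2 * of_nat i :: complex) = of_nat (2 * N - 2 * i)"
    using True by (simp add: of_nat_diff)
  finally show ?thesis
    by (rule pos_wt[OF vr_carrier[OF vr delta0_carrier]]) (use True in simp)
next
  case False
  then obtain s where i: "i = N + s" by (metis le_iff_add not_less)
  have "\<rho> (wv u (N + s)) delta0 = (\<lambda>i. 0)"
  proof (induction s)
    case 0 then show ?case using wN by simp
  next
    case (Suc s)
    let ?v = "\<rho> (wv u (N + Suc s)) delta0"
    have E: "Eop \<mu> ?v = (\<lambda>i. 0)"
    proof
      fix j
      have "Eop \<mu> ?v j = \<rho> (e * wv u (Suc (N + s))) delta0 j" by (simp add: vr_mult[OF vr] vr_gen[OF vr])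
      also have "\<dots> = \<rho> (adj e (wv u (Suc (N + s)))) delta0 j + \<rho> (wv u (Suc (N + s))) (\<rho> e delta0) j"
        unfolding adj_mult_left[of e] by (simp add: vr_add[OF vr] vr_mult[OF vr])
      also have "\<dots> = 0"
        unfolding W2[OF ue uh] by (simp add: lmap_scal[OF vr_lmap[OF vr]] Suc vr_gen[OF vr] Eop_delta0 vr_zerovec[OF vr])
      finally show "Eop \<mu> ?v j = 0" .
    qed
    have "Hop \<mu> ?v = (\<lambda>j. (\<mu> + (of_nat (2 * N) - 2 * of_nat (N + Suc s))) * ?v j)"
      by (rule vr_Hw[OF vr W1[OF ue uh]])
    also have "(\<mu> + (of_nat (2 * N) - 2 * of_nat (N + Suc s))) = \<mu> - 2 * of_nat (Suc s)"
      by (simp add: algebra_simps)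
    finally show ?case
      by (rule sing_wt[OF vr_carrier[OF vr delta0_carrier] E]) simp
  qed
  then show ?thesis using i by simp
qed

end



theorem lemma3p5:
  fixes sc :: "complex \<Rightarrow> 'a::ring_1" and e f h Q u1 u2 :: 'a and T :: "'a \<Rightarrow> 'a"
    and p q :: int and p1 p2 :: "complex poly" and \<mu> :: complex
  assumes U: "is_Usl2 sc e f h"
    and T: "is_transpose sc e f h T"
    and adm: "admissible p q"
    and R: "iso_V sc e f h (ad_span sc e f h Q) (2 * (2 * q + p - 1))"
    and RT: "iso_V sc e f h (ad_span sc e f h (T Q)) (2 * (2 * q + p - 1))"
    and u1: "u1 \<in> zero_wt h (ad_span sc e f h Q)" "u1 \<noteq> 0"
    and u2: "u2 \<in> zero_wt h (ad_span sc e f h (T Q))" "u2 \<noteq> 0"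
    and p1: "\<exists>y. u1 = evalh sc h p1 + y * e"
    and p2: "\<exists>y. u2 = evalh sc h p2 + y * f"
  shows "(annihilates_V sc e f h Q \<mu> \<longleftrightarrow> poly p1 \<mu> = 0)
       \<and> (poly p1 \<mu> = 0 \<longleftrightarrow> poly p2 (- \<mu>) = 0)"
proof -
  interpret U2 sc e f h by unfold_locales (rule U)
  define N where "N = nat (2 * q + p - 1)"
  have M1: "2 * q + p - 1 \<ge> 1" using adm unfolding admissible_def by simp
  have nN: "(of_int (2 * (2 * q + p - 1)) :: complex) = of_nat (2 * N)"
  proof -
    have "2 * (2 * q + p - 1) = int (2 * N)" using M1 unfolding N_def by simp
    then show ?thesis by (simp only: of_int_of_nat_eq)
  qed
  let ?R = "ad_span sc e f h Q"
  have R': "(\<forall>W'. W' \<subseteq> ?R \<and> ad_submodule sc e f h W' \<longrightarrow> W' = {0} \<or> W' = ?R) \<and>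
     (\<exists>u\<in>?R. u \<noteq> 0 \<and> adj e u = 0 \<and> adj h u = sc (of_int (2 * (2 * q + p - 1))) * u)"
    using R unfolding iso_V_def by (elim conjE) (intro conjI)
  obtain u where u: "u \<in> ?R" "u \<noteq> 0" "adj e u = 0" "adj h u = sc (of_nat (2 * N)) * u"
    using conjunct2[OF R'] unfolding nN by blast
  have irr: "\<And>W'. W' \<subseteq> ?R \<Longrightarrow> ad_submodule sc e f h W' \<Longrightarrow> W' = {0} \<or> W' = ?R"
    using conjunct1[OF R'] by blast
  have WR: "Wsp u = ?R"
  proof -
    have "Wsp u \<noteq> {0}" using u_Wsp[OF u(3) u(4)] u(2) by auto
    then show ?thesis using irr[OF Wsp_span[OF u(1)] Wsp_sub[OF u(3) u(4)]] by simp
  qed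
  have R0: "\<exists>a. r = sc a * wv u N" if "r \<in> ?R" "adj h r = 0" for r
  proof -
    from that(1) obtain c n where "r = (\<Sum>i<n. sc (c i) * wv u i)"
      unfolding WR[symmetric] Wsp_def by blast
    from proj0[OF u(3) u(4) this that(2)] show ?thesis .
  qed
  obtain a where a: "u1 = sc a * wv u N" using R0 u1(1) unfolding zero_wt_def by blast
  have a0: "a \<noteq> 0" using a u1(2) by auto
  have Tu2R: "T u2 \<in> ?R" using T_span[OF T] u2(1) unfolding zero_wt_def by blast
  have Tu2h: "adj h (T u2) = 0"
    using u2(1) T_adj_gen(3)[OF T, of u2] T_zero[OF T] unfolding zero_wt_def by simp
  obtain b where b: "T u2 = sc b * wv u N" using R0[OF Tu2R Tu2h] by blast
  have b0: "b \<noteq> 0"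
  proof
    assume "b = 0"
    then have "T u2 = 0" using b by simp
    then have "u2 = 0" using TT[OF T, of u2] T_zero[OF T] by simp
    then show False using u2(2) by simp
  qed
  obtain y1 where y1: "u1 = evalh sc h p1 + y1 * e" using p1 by blast
  obtain y2 where y2: "u2 = evalh sc h p2 + y2 * f" using p2 by blast
  have Tu2: "T u2 = (\<Sum>i\<le>degree p2. sc (coeff p2 i) * (- h) ^ i) + f * (- T y2)"
    unfolding y2 by (simp add: T_add[OF T] T_evalh[OF T] T_mult[OF T] T_gen[OF T])
  have ev1: "\<rho> u1 delta0 = (\<lambda>j. poly p1 \<mu> * delta0 j)" if vr: "is_Vrep sc e f h \<mu> \<rho>" for \<rho>
    unfolding y1 by (rule ext) (simp add: vr_add[OF vr] vr_evalh[OF vr] vr_ye[OF vr])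
  have ev2: "\<rho> (T u2) delta0 0 = poly p2 (- \<mu>)" if vr: "is_Vrep sc e f h \<mu> \<rho>" for \<rho>
  proof -
    have mh: "\<rho> (- h) delta0 = (\<lambda>i. (- \<mu>) * delta0 i)"
      by (rule ext) (simp add: lmap_neg[OF vr_lmap[OF vr]] vr_gen[OF vr] Hop_delta0)
    have "\<rho> (T u2) delta0 0 = \<rho> (\<Sum>i\<le>degree p2. sc (coeff p2 i) * (- h) ^ i) delta0 0
        + \<rho> (f * (- T y2)) delta0 0"
      unfolding Tu2 by (rule vr_add[OF vr])
    also have "\<dots> = (\<Sum>i\<le>degree p2. coeff p2 i * (- \<mu>) ^ i) * delta0 0 + 0"
      unfolding vr_polyz[OF vr mh] vr_fz0[OF vr] ..
    finally show ?thesis by (simp add: poly_altdef delta0_def)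
  qed
  have ea: "\<rho> u1 delta0 j = a * \<rho> (wv u N) delta0 j" if vr: "is_Vrep sc e f h \<mu> \<rho>" for \<rho> j
    unfolding a by (rule lmap_scal[OF vr_lmap[OF vr]])
  have eb: "\<rho> (T u2) delta0 j = b * \<rho> (wv u N) delta0 j" if vr: "is_Vrep sc e f h \<mu> \<rho>" for \<rho> j
    unfolding b by (rule lmap_scal[OF vr_lmap[OF vr]])
  have vr0: "is_Vrep sc e f h \<mu> (rho0 \<mu>)" by (rule Vrep_exists)
  have X1: "poly p1 \<mu> = a * rho0 \<mu> (wv u N) delta0 0"
    using ea[OF vr0, of 0] ev1[OF vr0] by (simp add: delta0_def)
  have X2: "poly p2 (- \<mu>) = b * rho0 \<mu> (wv u N) delta0 0"
    using eb[OF vr0, of 0] ev2[OF vr0] by simp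
  have part2: "poly p1 \<mu> = 0 \<longleftrightarrow> poly p2 (- \<mu>) = 0"
    unfolding X1 X2 using a0 b0 by simp
  have part1: "annihilates_V sc e f h Q \<mu> \<longleftrightarrow> poly p1 \<mu> = 0"
  proof
    assume ann: "annihilates_V sc e f h Q \<mu>"
    have Qk: "\<forall>v\<in>Vcarrier \<mu>. rho0 \<mu> Q v = (\<lambda>_. 0)" using ann vr0 unfolding annihilates_V_def by blast
    have adjk: "\<forall>v\<in>Vcarrier \<mu>. rho0 \<mu> (adj x w) v = (\<lambda>_. 0)"
      if IH: "\<forall>v\<in>Vcarrier \<mu>. rho0 \<mu> w v = (\<lambda>_. 0)" for x w
    proof
      fix v assume v: "v \<in> Vcarrier \<mu>"
      have 1: "rho0 \<mu> w v = (\<lambda>_. 0)" using IH v by blast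
      have 2: "rho0 \<mu> w (rho0 \<mu> x v) = (\<lambda>_. 0)" using IH vr_carrier[OF vr0 v] by blast
      show "rho0 \<mu> (adj x w) v = (\<lambda>_. 0)"
        unfolding adj_def fun_eq_iff lmap_diff[OF vr_lmap[OF vr0]] vr_mult[OF vr0] 1 2
        by (simp add: vr_zerovec[OF vr0])
    qed
    have "r \<in> ?R \<Longrightarrow> \<forall>v\<in>Vcarrier \<mu>. rho0 \<mu> r v = (\<lambda>_. 0)" for r
    proof (induction rule: ad_span.induct)
      case gen then show ?case using Qk by blast
    next
      case zero then show ?case by (simp add: vr_zero[OF vr0])
    next
      case (add u v) then show ?case by (simp add: vr_add[OF vr0] fun_eq_iff)
    next
      case (smult u c) then show ?case by (simp add: lmap_scal[OF vr_lmap[OF vr0]] fun_eq_iff)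
    next
      case (ad_e u) show ?case using ad_e.IH by (rule adjk)
    next
      case (ad_f u) show ?case using ad_f.IH by (rule adjk)
    next
      case (ad_h u) show ?case using ad_h.IH by (rule adjk)
    qed
    then have "rho0 \<mu> u1 delta0 = (\<lambda>_. 0)" using u1(1) delta0_carrier unfolding zero_wt_def by blast
    then have "rho0 \<mu> u1 delta0 0 = 0" by simp
    then show "poly p1 \<mu> = 0" unfolding ev1[OF vr0] by (simp add: delta0_def)
  next
    assume P: "poly p1 \<mu> = 0"
    show "annihilates_V sc e f h Q \<mu>"
      unfolding annihilates_V_def
    proof (intro allI impI ballI)
      fix \<rho> v assume vr: "is_Vrep sc e f h \<mu> \<rho>" and v: "v \<in> Vcarrier \<mu>"
      have wN: "\<rho> (wv u N) delta0 = (\<lambda>i. 0)"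
      proof
        fix j
        have "a * \<rho> (wv u N) delta0 j = 0" using ea[OF vr, of j] ev1[OF vr] P by simp
        then show "\<rho> (wv u N) delta0 j = 0" using a0 by simp
      qed
      have wi: "\<rho> (wv u i) delta0 = (\<lambda>i. 0)" for i
        by (rule kill_all[OF vr u(3) u(4) wN])
      have Rk: "\<rho> r delta0 = (\<lambda>_. 0)" if "r \<in> ?R" for r
      proof -
        from that obtain c n where "r = (\<Sum>i<n. sc (c i) * wv u i)"
          unfolding WR[symmetric] Wsp_def by blast
        then show ?thesis by (simp add: fun_eq_iff lmap_sum[OF vr_lmap[OF vr]] wi)
      qed
      have Rf: "\<rho> (r * f ^ i) delta0 = (\<lambda>_. 0)" if "r \<in> ?R" for r i
        using that
      proof (induction i arbitrary: r)
        case 0 then show ?case using Rk by simp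
      next
        case (Suc i)
        have "r * f ^ Suc i = f * (r * f ^ i) - adj f r * f ^ i"
          unfolding adj_def by (simp add: left_diff_distrib mult.assoc)
        moreover have "adj f r \<in> ?R" using Suc.prems by (rule ad_span.ad_f)
        ultimately show ?case
          using Suc.IH Suc.prems
          by (simp add: fun_eq_iff lmap_diff[OF vr_lmap[OF vr]] vr_mult[OF vr] vr_gen[OF vr] Fop_def)
      qed
      have "\<rho> Q v = \<rho> Q (\<rho> (\<Sum>j | v j \<noteq> 0. sc (v j) * f ^ j) delta0)"
        using vr_decomp[OF vr v] by simp
      also have "\<dots> = \<rho> (\<Sum>j | v j \<noteq> 0. sc (v j) * (Q * f ^ j)) delta0"
        by (simp add: vr_mult[OF vr, symmetric] mult_sum_sc)
      also have "\<dots> = (\<lambda>_. 0)"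
        using Rf[OF ad_span.gen] by (simp add: fun_eq_iff lmap_sum[OF vr_lmap[OF vr]])
      finally show "\<rho> Q v = (\<lambda>_. 0)" .
    qed
  qed
  show ?thesis using part1 part2 by blast
qed



end
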